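(* Let $\mathcal{M}=(S,P,E,s_{init},L)$ be a CTMC with absorbing goal state $g$, let $\varepsilon,\delta\geq0$, $q=\max_{p\in S}E(p)$, $t\geq0$, and $s,s'\in S$ with $s\sim_{\varepsilon,\delta}s'$. (1) If $\delta=0$ then $|\mathrm{Pr}_s(\lozenge^{\leq t}g)-\mathrm{Pr}_{s'}(\lozenge^{\leq t}g)|\leq1-e^{-qt\varepsilon}$. (2) If $\varepsilon=0$ then $|\mathrm{Pr}_s(\lozenge^{\leq t}g)-\mathrm{Pr}_{s'}(\lozenge^{\leq t}g)|\leq1-e^{-qt(e^{\delta}-1)}$. (3) If $\varepsilon=\delta=0$ then $\mathrm{Pr}_s(\lozenge^{\leq t}g)=\mathrm{Pr}_{s'}(\lozenge^{\leq t}g)$.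
   Context: A CTMC $(S,P,E,s_{init},L)$: finite $S$, $P\colon S\to\mathrm{Distr}(S)$ ($P(s,A)=\sum_{a\in A}P(s,a)$), $E\colon S\to\mathbb{R}_{>0}$, initial state, labeling $L$; residence time in $s$ is exponential with rate $E(s)$, then a jump to $s'$ with probability $P(s,s')$. $\mathrm{Pr}_s(\lozenge^{\leq t}g)$: probability of reaching $g$ from $s$ within time $t$. For $R\subseteq S\times S$, $R(A)=\{t'\mid\exists a\in A:(a,t')\in R\}$. A reflexive symmetric $R$ is an $(\varepsilon,\delta)$-bisimulation if for all $(s,s')\in R$: $L(s)=L(s')$, $|\ln E(s)-\ln E(s')|\leq\delta$, and $P(s,A)\leq P(s',R(A))+\varepsilon$ for all $A\subseteq S$; $s\sim_{\varepsilon,\delta}s'$ if some such relation contains $(s,s')$. Standing assumption: $g$ is the unique goal state, absorbing and uniquely labeled, and all states from which $g$ is unreachable are collapsed into one absorbing uniquely labeled fail state. *)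

theory Defs
  imports "HOL-Probability.Probability"
begin

text \<open>A CTMC over a finite state type 's: embedded jump distribution P, exit rates E,
  labelling L. Residence time in a state x is exponential with rate E x.\<close>

definition ctmc :: "('s::finite \<Rightarrow> 's pmf) \<Rightarrow> ('s \<Rightarrow> real) \<Rightarrow> bool" where
  "ctmc P E \<longleftrightarrow> (\<forall>x. 0 < E x)"

definition reaches :: "('s \<Rightarrow> 's pmf) \<Rightarrow> 's \<Rightarrow> 's \<Rightarrow> bool" where
  "reaches P x y \<longleftrightarrow> (x, y) \<in> {(a, b). b \<in> set_pmf (P a)}\<^sup>*"

definition standing_assm :: "('s \<Rightarrow> 's pmf) \<Rightarrow> ('s \<Rightarrow> 'l) \<Rightarrow> 's \<Rightarrow> bool" where
  "standing_assm P L g \<longleftrightarrow>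
     P g = return_pmf g \<and> (\<forall>x. L x = L g \<longrightarrow> x = g) \<and>
     (\<forall>f. \<not> reaches P f g \<longrightarrow>
        P f = return_pmf f \<and> (\<forall>x. L x = L f \<longrightarrow> x = f) \<and>
        (\<forall>x. \<not> reaches P x g \<longrightarrow> x = f))"

definition first_hit_paths :: "'s \<Rightarrow> 's \<Rightarrow> nat \<Rightarrow> 's list set" where
  "first_hit_paths s g n = {xs. length xs = Suc n \<and> xs ! 0 = s \<and> xs ! n = g \<and>
                                 (\<forall>i<n. xs ! i \<noteq> g)}"

text \<open>Probability (under the path measure) of the cylinder of paths following the
  state sequence xs (of length n+1) with the sum of the first n residence times at most t:
  product of jump probabilities times the probability that a sum of independent
  exponential residence times is \<le> t.\<close>
definition cyl_prob :: "('s \<Rightarrow> 's pmf) \<Rightarrow> ('s \<Rightarrow> real) \<Rightarrow> nat \<Rightarrow> 's list \<Rightarrow> real \<Rightarrow> real" where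
  "cyl_prob P E n xs t =
     (\<Prod>i<n. pmf (P (xs ! i)) (xs ! Suc i)) *
     measure (PiM {..<n} (\<lambda>i. density lborel (exponential_density (E (xs ! i)))))
             {x \<in> space (PiM {..<n} (\<lambda>i. density lborel (exponential_density (E (xs ! i))))).
                (\<Sum>i<n. x i) \<le> t}"

text \<open>Pr_s(reach g within time t): the event is the disjoint union over n of the events
  "the n-th jump is the first visit to g and happens by time t".\<close>
definition reach_prob :: "('s::finite \<Rightarrow> 's pmf) \<Rightarrow> ('s \<Rightarrow> real) \<Rightarrow> 's \<Rightarrow> 's \<Rightarrow> real \<Rightarrow> real" where
  "reach_prob P E g s t = (\<Sum>n. \<Sum>xs\<in>first_hit_paths s g n. cyl_prob P E n xs t)"

definition eps_delta_bisim ::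
  "('s \<Rightarrow> 's pmf) \<Rightarrow> ('s \<Rightarrow> real) \<Rightarrow> ('s \<Rightarrow> 'l) \<Rightarrow> real \<Rightarrow> real \<Rightarrow> ('s \<times> 's) set \<Rightarrow> bool" where
  "eps_delta_bisim P E L \<epsilon> \<delta> R \<longleftrightarrow> refl R \<and> sym R \<and>
     (\<forall>(x, y) \<in> R. L x = L y \<and> \<bar>ln (E x) - ln (E y)\<bar> \<le> \<delta> \<and>
        (\<forall>A. measure_pmf.prob (P x) A \<le> measure_pmf.prob (P y) (R `` A) + \<epsilon>))"

definition bisimilar ::
  "('s \<Rightarrow> 's pmf) \<Rightarrow> ('s \<Rightarrow> real) \<Rightarrow> ('s \<Rightarrow> 'l) \<Rightarrow> real \<Rightarrow> real \<Rightarrow> 's \<Rightarrow> 's \<Rightarrow> bool" where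
  "bisimilar P E L \<epsilon> \<delta> x y \<longleftrightarrow> (\<exists>R. eps_delta_bisim P E L \<epsilon> \<delta> R \<and> (x, y) \<in> R)"

end

theory Submission
  imports Defs
begin

abbreviation Expd :: "real \<Rightarrow> real measure" where
  "Expd l \<equiv> density lborel (exponential_density l)"

definition G :: "(nat \<Rightarrow> real) \<Rightarrow> nat \<Rightarrow> real \<Rightarrow> real" where
  "G r n t = measure (PiM {..<n} (\<lambda>i. density lborel (exponential_density (r i))))
     {x \<in> space (PiM {..<n} (\<lambda>i. density lborel (exponential_density (r i)))). (\<Sum>i<n. x i) \<le> t}"

lemma prob_Expd: "0 < l \<Longrightarrow> prob_space (Expd l)"
  by (rule prob_space_exponential_density)

lemma G_Suc_emeasure:
  assumes r: "\<And>i. 0 < r i"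
  shows "emeasure (PiM {..<Suc n} (\<lambda>i. Expd (r i)))
     {x \<in> space (PiM {..<Suc n} (\<lambda>i. Expd (r i))). (\<Sum>i<Suc n. x i) \<le> t}
    = (\<integral>\<^sup>+ y. emeasure (PiM {..<n} (\<lambda>i. Expd (r (Suc i))))
     {x \<in> space (PiM {..<n} (\<lambda>i. Expd (r (Suc i)))). (\<Sum>i<n. x i) \<le> t - y} \<partial>Expd (r 0))"
proof -
  define M where "M = (\<lambda>i. Expd (r i))"
  interpret product_prob_space M
    unfolding M_def product_prob_space_def product_prob_space_axioms_def product_sigma_finite_def
    using r by (auto intro: prob_Expd prob_space_imp_sigma_finite)
  have sM[simp, measurable_cong]: "sets (M i) = sets borel" for i
    by (simp add: M_def)
  define J where "J = Suc ` {..<n}"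
  have J: "finite J" "0 \<notin> J" "{..<Suc n} = insert 0 J"
    unfolding J_def by (auto simp: lessThan_Suc_eq_insert_0)
  define A where "A = {x \<in> space (PiM {..<Suc n} M). (\<Sum>i<Suc n. x i) \<le> t}"
  have A[measurable]: "A \<in> sets (PiM (insert 0 J) M)"
    unfolding A_def J(3)[symmetric] by measurable
  have "emeasure (PiM (insert 0 J) M) A = (\<integral>\<^sup>+ x. indicator A x \<partial>PiM (insert 0 J) M)"
    by simp
  also have "\<dots> = (\<integral>\<^sup>+ y. (\<integral>\<^sup>+ x. indicator A (x(0 := y)) \<partial>PiM J M) \<partial>M 0)"
    by (rule product_nn_integral_insert_rev) (use J in auto)
  also have "\<dots> = (\<integral>\<^sup>+ y. emeasure (PiM {..<n} (\<lambda>i. M (Suc i)))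
     {x \<in> space (PiM {..<n} (\<lambda>i. M (Suc i))). (\<Sum>i<n. x i) \<le> t - y} \<partial>M 0)"
  proof (rule nn_integral_cong)
    fix y assume "y \<in> space (M 0)"
    have 1: "(\<integral>\<^sup>+ x. indicator A (x(0 := y)) \<partial>PiM J M)
       = (\<integral>\<^sup>+ x. indicator {x \<in> space (PiM J M). (\<Sum>i<n. x (Suc i)) \<le> t - y} x \<partial>PiM J M)"
    proof (rule nn_integral_cong)
      fix x assume x: "x \<in> space (PiM J M)"
      have "x(0 := y) \<in> space (PiM {..<Suc n} M)"
        using x J by (auto simp: space_PiM PiE_iff M_def extensional_def)
      moreover have "(\<Sum>i<Suc n. (x(0 := y)) i) = y + (\<Sum>i<n. x (Suc i))"
        by (subst sum.lessThan_Suc_shift) simp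
      ultimately show "indicator A (x(0 := y)) = indicator {x \<in> space (PiM J M). (\<Sum>i<n. x (Suc i)) \<le> t - y} x"
        using x by (auto simp: A_def indicator_def)
    qed
    have B: "{x \<in> space (PiM J M). (\<Sum>i<n. x (Suc i)) \<le> t - y} \<in> sets (PiM J M)"
      unfolding J_def by measurable
    have dist: "distr (PiM J M) (PiM {..<n} (\<lambda>i. M (Suc i))) (\<lambda>\<omega>. \<lambda>i\<in>{..<n}. \<omega> (Suc i)) = PiM {..<n} (\<lambda>i. M (Suc i))"
      by (rule distr_PiM_reindex) (auto simp: J_def M_def intro: prob_Expd r)
    have meas: "(\<lambda>\<omega>. \<lambda>i\<in>{..<n}. \<omega> (Suc i)) \<in> measurable (PiM J M) (PiM {..<n} (\<lambda>i. M (Suc i)))"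
      unfolding J_def by measurable
    have C: "{x \<in> space (PiM {..<n} (\<lambda>i. M (Suc i))). (\<Sum>i<n. x i) \<le> t - y} \<in> sets (PiM {..<n} (\<lambda>i. M (Suc i)))"
      by measurable
    have "emeasure (PiM {..<n} (\<lambda>i. M (Suc i))) {x \<in> space (PiM {..<n} (\<lambda>i. M (Suc i))). (\<Sum>i<n. x i) \<le> t - y}
       = emeasure (distr (PiM J M) (PiM {..<n} (\<lambda>i. M (Suc i))) (\<lambda>\<omega>. \<lambda>i\<in>{..<n}. \<omega> (Suc i)))
            {x \<in> space (PiM {..<n} (\<lambda>i. M (Suc i))). (\<Sum>i<n. x i) \<le> t - y}"
      by (simp only: dist)
    also have "\<dots> = emeasure (PiM J M) ((\<lambda>\<omega>. \<lambda>i\<in>{..<n}. \<omega> (Suc i)) -` {x \<in> space (PiM {..<n} (\<lambda>i. M (Suc i))). (\<Sum>i<n. x i) \<le> t - y} \<inter> space (PiM J M))"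
      by (rule emeasure_distr[OF meas C])
    also have "((\<lambda>\<omega>. \<lambda>i\<in>{..<n}. \<omega> (Suc i)) -` {x \<in> space (PiM {..<n} (\<lambda>i. M (Suc i))). (\<Sum>i<n. x i) \<le> t - y} \<inter> space (PiM J M))
       = {x \<in> space (PiM J M). (\<Sum>i<n. x (Suc i)) \<le> t - y}"
      using measurable_space[OF meas] by auto
    finally show "(\<integral>\<^sup>+ x. indicator A (x(0 := y)) \<partial>PiM J M) = emeasure (PiM {..<n} (\<lambda>i. M (Suc i)))
     {x \<in> space (PiM {..<n} (\<lambda>i. M (Suc i))). (\<Sum>i<n. x i) \<le> t - y}"
      using 1 B by simp
  qed
  finally show ?thesis unfolding M_def A_def J(3) .
qed

lemma G_0: "G r 0 t = (if 0 \<le> t then 1 else 0)"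
  unfolding G_def by (auto simp: PiM_empty space_PiM)

lemma G_mono:
  assumes "\<And>i. 0 < r i" "s \<le> t"
  shows "G r n s \<le> G r n t"
proof -
  interpret prob_space "PiM {..<n} (\<lambda>i. Expd (r i))"
    using assms by (intro prob_space_PiM prob_Expd) auto
  show ?thesis unfolding G_def
    by (rule finite_measure_mono) (use assms in \<open>auto\<close>)
qed

lemma G_nonneg: "0 \<le> G r n t" unfolding G_def by simp

lemma G_le1:
  assumes "\<And>i. 0 < r i"
  shows "G r n t \<le> 1"
proof -
  interpret prob_space "PiM {..<n} (\<lambda>i. Expd (r i))"
    using assms by (intro prob_space_PiM prob_Expd) auto
  show ?thesis unfolding G_def by simp
qed

lemma G_meas:
  assumes "\<And>i. 0 < r i"
  shows "G r n \<in> borel_measurable borel"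
  by (rule borel_measurable_mono) (auto simp: mono_def intro: G_mono assms)


lemma integrable_bounded_Expd:
  fixes f :: "real \<Rightarrow> real" and B :: real
  assumes "0 < l" "f \<in> borel_measurable borel" "\<And>x. \<bar>f x\<bar> \<le> B"
  shows "integrable (Expd l) f"
proof -
  interpret prob_space "Expd l" using assms(1) by (rule prob_Expd)
  show ?thesis
    by (rule integrable_const_bound[where B=B]) (use assms in auto)
qed

lemma G_Suc:
  assumes r: "\<And>i. 0 < r i"
  shows "G r (Suc n) t = integral\<^sup>L (Expd (r 0)) (\<lambda>u. G (\<lambda>i. r (Suc i)) n (t - u))"
proof -
  interpret P1: prob_space "PiM {..<Suc n} (\<lambda>i. Expd (r i))"
    using r by (intro prob_space_PiM prob_Expd) auto
  interpret P2: prob_space "PiM {..<n} (\<lambda>i. Expd (r (Suc i)))"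
    using r by (intro prob_space_PiM prob_Expd) auto
  have r': "\<And>i. 0 < r (Suc i)" using r by auto
  have meas: "(\<lambda>u. G (\<lambda>i. r (Suc i)) n (t - u)) \<in> borel_measurable borel"
  proof -
    have [measurable]: "G (\<lambda>i. r (Suc i)) n \<in> borel_measurable borel" by (rule G_meas[OF r'])
    show ?thesis by measurable
  qed
  have int: "integrable (Expd (r 0)) (\<lambda>u. G (\<lambda>i. r (Suc i)) n (t - u))"
    by (rule integrable_bounded_Expd[where B=1]) (use r meas G_le1[OF r'] G_nonneg in auto)
  have "ennreal (G r (Suc n) t) = emeasure (PiM {..<Suc n} (\<lambda>i. Expd (r i)))
     {x \<in> space (PiM {..<Suc n} (\<lambda>i. Expd (r i))). (\<Sum>i<Suc n. x i) \<le> t}"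
    unfolding G_def by (simp only: P1.emeasure_eq_measure)
  also have "\<dots> = (\<integral>\<^sup>+ y. emeasure (PiM {..<n} (\<lambda>i. Expd (r (Suc i))))
     {x \<in> space (PiM {..<n} (\<lambda>i. Expd (r (Suc i)))). (\<Sum>i<n. x i) \<le> t - y} \<partial>Expd (r 0))"
    by (rule G_Suc_emeasure[OF r])
  also have "\<dots> = (\<integral>\<^sup>+ y. ennreal (G (\<lambda>i. r (Suc i)) n (t - y)) \<partial>Expd (r 0))"
    unfolding G_def by (simp only: P2.emeasure_eq_measure)
  also have "\<dots> = ennreal (integral\<^sup>L (Expd (r 0)) (\<lambda>u. G (\<lambda>i. r (Suc i)) n (t - u)))"
    by (rule nn_integral_eq_integral[OF int]) (simp add: G_nonneg)
  finally show ?thesis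
    by (subst (asm) ennreal_inj) (auto simp: G_nonneg intro!: integral_nonneg_AE)
qed

lemma expd_meas[measurable]: "exponential_density l \<in> borel_measurable borel"
  by (simp add: exponential_density_def)

lemma expd_nonneg: "0 < l \<Longrightarrow> 0 \<le> exponential_density l x"
  by (simp add: exponential_density_def)

lemma int_Expd:
  fixes f :: "real \<Rightarrow> real"
  assumes "0 < l" "f \<in> borel_measurable borel"
  shows "integral\<^sup>L (Expd l) f = (\<integral>u. exponential_density l u * f u \<partial>lborel)"
  using integral_density[of f lborel "exponential_density l"] assms expd_nonneg[OF assms(1)] by simp

lemma integrable_Expd_lborel:
  fixes f :: "real \<Rightarrow> real"
  assumes "0 < l" "f \<in> borel_measurable borel" "\<And>x. \<bar>f x\<bar> \<le> B"
  shows "integrable lborel (\<lambda>u. exponential_density l u * f u)"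
proof -
  have "integrable (Expd l) f" by (rule integrable_bounded_Expd[OF assms])
  then show ?thesis
    using integrable_density[of f lborel "exponential_density l"] assms expd_nonneg[OF assms(1)] by simp
qed

lemma G_neg:
  assumes "\<And>i. 0 < r i" "t < 0"
  shows "G r n t = 0"
  using assms
proof (induction n arbitrary: r t)
  case 0
  then show ?case by (simp add: G_0)
next
  case (Suc n)
  have r': "\<And>i. 0 < r (Suc i)" using Suc by auto
  have [measurable]: "G (\<lambda>i. r (Suc i)) n \<in> borel_measurable borel" by (rule G_meas[OF r'])
  have "G r (Suc n) t = integral\<^sup>L (Expd (r 0)) (\<lambda>u. G (\<lambda>i. r (Suc i)) n (t - u))"
    by (rule G_Suc[OF Suc.prems(1)])
  also have "\<dots> = (\<integral>u. exponential_density (r 0) u * G (\<lambda>i. r (Suc i)) n (t - u) \<partial>lborel)"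
    by (rule int_Expd) (use Suc.prems in auto)
  also have "\<dots> = integral\<^sup>L lborel (\<lambda>u::real. (0::real))"
  proof -
    have "exponential_density (r 0) u * G (\<lambda>i. r (Suc i)) n (t - u) = 0" for u
    proof (cases "u < 0")
      case True then show ?thesis by (simp add: exponential_density_def)
    next
      case False then show ?thesis using Suc.IH[OF r', of "t - u"] Suc.prems by simp
    qed
    then have "(\<lambda>u. exponential_density (r 0) u * G (\<lambda>i. r (Suc i)) n (t - u)) = (\<lambda>u. 0)"
      by (intro ext)
    then show ?thesis by (simp only:)
  qed
  finally show ?case by simp
qed

definition fh :: "('s::finite \<Rightarrow> 's pmf) \<Rightarrow> ('s \<Rightarrow> real) \<Rightarrow> 's \<Rightarrow> nat \<Rightarrow> 's \<Rightarrow> real \<Rightarrow> real" where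
  "fh P E g n x t = (\<Sum>xs\<in>first_hit_paths x g n. cyl_prob P E n xs t)"

definition FF :: "('s::finite \<Rightarrow> 's pmf) \<Rightarrow> ('s \<Rightarrow> real) \<Rightarrow> 's \<Rightarrow> nat \<Rightarrow> 's \<Rightarrow> real \<Rightarrow> real" where
  "FF P E g N x t = (\<Sum>n<N. fh P E g n x t)"

lemma finite_fhp: "finite (first_hit_paths (x::'s::finite) g n)"
proof (rule finite_subset)
  show "first_hit_paths x g n \<subseteq> {xs. set xs \<subseteq> UNIV \<and> length xs = Suc n}"
    by (auto simp: first_hit_paths_def)
  show "finite {xs. set xs \<subseteq> (UNIV::'s set) \<and> length xs = Suc n}"
    by (rule finite_lists_length_eq) simp
qed

lemma cyl_prob_G: "cyl_prob P E n xs t = (\<Prod>i<n. pmf (P (xs ! i)) (xs ! Suc i)) * G (\<lambda>i. E (xs ! i)) n t"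
  unfolding cyl_prob_def G_def ..

lemma prod_pmf_bounds: "0 \<le> (\<Prod>i<n. pmf (P (xs ! i)) (xs ! Suc i)) \<and> (\<Prod>i<n. pmf (P (xs ! i)) (xs ! Suc i)) \<le> 1"
  by (auto intro: prod_nonneg prod_le_1 pmf_le_1)

lemma cyl_bounds:
  assumes "\<And>x. 0 < E x"
  shows "0 \<le> cyl_prob P E n xs t \<and> cyl_prob P E n xs t \<le> 1"
  unfolding cyl_prob_G using prod_pmf_bounds[where n=n and P=P and xs=xs] G_nonneg[of "\<lambda>i. E (xs ! i)" n t]
    G_le1[of "\<lambda>i. E (xs ! i)" n t] assms
  by (auto intro: mult_le_one)

lemma cyl_meas[measurable]:
  assumes "\<And>x. 0 < E x"
  shows "cyl_prob P E n xs \<in> borel_measurable borel"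
proof -
  have [measurable]: "G (\<lambda>i. E (xs ! i)) n \<in> borel_measurable borel" by (rule G_meas) (use assms in auto)
  show ?thesis unfolding cyl_prob_G[abs_def] by measurable
qed

lemma fh_meas:
  assumes "\<And>x. 0 < E x"
  shows "fh P E g n x \<in> borel_measurable borel"
  unfolding fh_def[abs_def] using cyl_meas[where E=E, OF assms] by measurable

lemma FF_meas:
  assumes "\<And>x. 0 < E x"
  shows "FF P E g N x \<in> borel_measurable borel"
  unfolding FF_def[abs_def] using fh_meas[where E=E, OF assms] by measurable

lemma fh_nonneg:
  assumes "\<And>x. 0 < E x"
  shows "0 \<le> fh P E g n x t"
  unfolding fh_def using cyl_bounds[where E=E, OF assms] by (auto intro: sum_nonneg)

lemma fh_bound:
  assumes "\<And>x. 0 < E x"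
  shows "\<bar>fh P E g n x t\<bar> \<le> real (card (first_hit_paths x g n))"
proof -
  have "fh P E g n x t \<le> (\<Sum>xs\<in>first_hit_paths x g n. 1)"
    unfolding fh_def using cyl_bounds[where E=E, OF assms] by (intro sum_mono) auto
  then show ?thesis using fh_nonneg[where E=E, OF assms] by simp
qed

lemma FF_nonneg:
  assumes "\<And>x. 0 < E x"
  shows "0 \<le> FF P E g N x t"
  unfolding FF_def using fh_nonneg[where E=E, OF assms] by (auto intro: sum_nonneg)

lemma FF_bound:
  assumes "\<And>x. 0 < E x"
  shows "\<bar>FF P E g N x t\<bar> \<le> (\<Sum>n<N. real (card (first_hit_paths x g n)))"
proof -
  have "FF P E g N x t \<le> (\<Sum>n<N. real (card (first_hit_paths x g n)))"
    unfolding FF_def using fh_bound[where E=E, OF assms] by (intro sum_mono) (auto simp: abs_le_iff)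
  then show ?thesis using FF_nonneg[where E=E, OF assms] by simp
qed


lemma fhp_0: "first_hit_paths x g 0 = (if x = g then {[x]} else {})"
proof -
  have "xs = [xs ! 0]" if "length xs = Suc 0" for xs :: "'a list"
    using that by (cases xs) auto
  then show ?thesis by (auto simp: first_hit_paths_def)
qed

lemma fhp_g_Suc: "first_hit_paths g g (Suc n) = {}"
  by (auto simp: first_hit_paths_def)

lemma fhp_Suc:
  assumes "x \<noteq> g"
  shows "first_hit_paths x g (Suc n) = (\<lambda>ys. x # ys) ` (\<Union>y. first_hit_paths y g n)"
proof safe
  fix xs assume xs: "xs \<in> first_hit_paths x g (Suc n)"
  then obtain ys where ys: "xs = x # ys"
    by (cases xs) (auto simp: first_hit_paths_def)
  have "ys \<in> first_hit_paths (ys ! 0) g n"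
    using xs unfolding ys first_hit_paths_def by auto
  then show "xs \<in> (\<lambda>ys. x # ys) ` (\<Union>y. first_hit_paths y g n)"
    using ys by blast
next
  fix ys y assume "ys \<in> first_hit_paths y g n"
  then show "x # ys \<in> first_hit_paths x g (Suc n)"
    using assms by (auto simp: first_hit_paths_def less_Suc_eq_0_disj)
qed

lemma cyl_Cons:
  assumes E: "\<And>x. 0 < E x"
  shows "cyl_prob P E (Suc n) (x # ys) t
    = pmf (P x) (ys ! 0) * integral\<^sup>L (Expd (E x)) (\<lambda>u. cyl_prob P E n ys (t - u))"
proof -
  have "G (\<lambda>i. E ((x # ys) ! i)) (Suc n) t = integral\<^sup>L (Expd (E x)) (\<lambda>u. G (\<lambda>i. E (ys ! i)) n (t - u))"
    using G_Suc[of "\<lambda>i. E ((x # ys) ! i)" n t] E by simp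
  moreover have "(\<Prod>i<Suc n. pmf (P ((x # ys) ! i)) ((x # ys) ! Suc i))
     = pmf (P x) (ys ! 0) * (\<Prod>i<n. pmf (P (ys ! i)) (ys ! Suc i))"
    by (subst prod.lessThan_Suc_shift) simp
  ultimately show ?thesis
    unfolding cyl_prob_G by simp
qed

lemma integrable_fh:
  assumes E: "\<And>x. 0 < E x" and that: "0 < l"
  shows "integrable (Expd l) (\<lambda>u. fh P E g n y (t - u))"
proof -
  have [measurable]: "fh P E g n y \<in> borel_measurable borel" by (rule fh_meas[where E=E, OF E])
  show ?thesis
    by (rule integrable_bounded_Expd[OF that]) (use fh_bound[where E=E, OF E] in auto)
qed

lemma integrable_cyl:
  assumes E: "\<And>x. 0 < E x" and that: "0 < l"
  shows "integrable (Expd l) (\<lambda>u. cyl_prob P E n ys (t - u))"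
proof -
  have [measurable]: "cyl_prob P E n ys \<in> borel_measurable borel" by (rule cyl_meas[where E=E, OF E])
  show ?thesis
    by (rule integrable_bounded_Expd[where B=1, OF that]) (use cyl_bounds[where E=E, OF E] in auto)
qed

lemma integrable_FF:
  assumes E: "\<And>x. 0 < E x" and that: "0 < l"
  shows "integrable (Expd l) (\<lambda>u. FF P E g n y (t - u))"
proof -
  have [measurable]: "FF P E g n y \<in> borel_measurable borel" by (rule FF_meas[where E=E, OF E])
  show ?thesis
    by (rule integrable_bounded_Expd[OF that]) (use FF_bound[where E=E, OF E] in auto)
qed

lemma fh_Suc:
  assumes E: "\<And>x. 0 < E x"
  shows "fh P E g (Suc n) x t = (if x = g then 0 else
     (\<Sum>y\<in>UNIV. pmf (P x) y * integral\<^sup>L (Expd (E x)) (\<lambda>u. fh P E g n y (t - u))))"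
proof (cases "x = g")
  case True
  then show ?thesis by (simp add: fh_def fhp_g_Suc)
next
  case False
  have "fh P E g (Suc n) x t = (\<Sum>xs\<in>(\<lambda>ys. x # ys) ` (\<Union>y. first_hit_paths y g n). cyl_prob P E (Suc n) xs t)"
    unfolding fh_def fhp_Suc[OF False] ..
  also have "\<dots> = (\<Sum>ys\<in>(\<Union>y. first_hit_paths y g n). cyl_prob P E (Suc n) (x # ys) t)"
    by (subst sum.reindex) (auto simp: inj_on_def)
  also have "\<dots> = (\<Sum>y\<in>UNIV. \<Sum>ys\<in>first_hit_paths y g n. cyl_prob P E (Suc n) (x # ys) t)"
    by (rule sum.UNION_disjoint) (auto simp: finite_fhp, auto simp: first_hit_paths_def)
  also have "\<dots> = (\<Sum>y\<in>UNIV. pmf (P x) y * integral\<^sup>L (Expd (E x)) (\<lambda>u. fh P E g n y (t - u)))"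
  proof (rule sum.cong[OF refl])
    fix y
    have "(\<Sum>ys\<in>first_hit_paths y g n. cyl_prob P E (Suc n) (x # ys) t)
       = (\<Sum>ys\<in>first_hit_paths y g n. pmf (P x) y * integral\<^sup>L (Expd (E x)) (\<lambda>u. cyl_prob P E n ys (t - u)))"
      by (rule sum.cong[OF refl]) (auto simp: cyl_Cons[where E=E, OF E] first_hit_paths_def)
    also have "\<dots> = pmf (P x) y * (\<Sum>ys\<in>first_hit_paths y g n. integral\<^sup>L (Expd (E x)) (\<lambda>u. cyl_prob P E n ys (t - u)))"
      by (simp add: sum_distrib_left)
    also have "(\<Sum>ys\<in>first_hit_paths y g n. integral\<^sup>L (Expd (E x)) (\<lambda>u. cyl_prob P E n ys (t - u)))
       = integral\<^sup>L (Expd (E x)) (\<lambda>u. fh P E g n y (t - u))"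
      unfolding fh_def by (subst Bochner_Integration.integral_sum) (auto intro: integrable_cyl[where E=E, OF E E])
    finally show "(\<Sum>ys\<in>first_hit_paths y g n. cyl_prob P E (Suc n) (x # ys) t)
       = pmf (P x) y * integral\<^sup>L (Expd (E x)) (\<lambda>u. fh P E g n y (t - u))" .
  qed
  finally show ?thesis using False by simp
qed

lemma fh_0: "fh P E g 0 x t = (if x = g \<and> 0 \<le> t then 1 else 0)"
  by (simp add: fh_def fhp_0 cyl_prob_G G_0)

lemma FF_Suc:
  assumes E: "\<And>x. 0 < E x"
  shows "FF P E g (Suc N) x t = (if x = g then (if 0 \<le> t then 1 else 0) else
     integral\<^sup>L (Expd (E x)) (\<lambda>u. \<Sum>y\<in>UNIV. pmf (P x) y * FF P E g N y (t - u)))"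
proof (cases "x = g")
  case True
  then show ?thesis
    unfolding FF_def by (subst sum.lessThan_Suc_shift) (simp add: fh_0 fh_Suc[where E=E, OF E])
next
  case False
  have "FF P E g (Suc N) x t = (\<Sum>n<N. fh P E g (Suc n) x t)"
    unfolding FF_def using False by (subst sum.lessThan_Suc_shift) (simp add: fh_0)
  also have "\<dots> = (\<Sum>n<N. \<Sum>y\<in>UNIV. pmf (P x) y * integral\<^sup>L (Expd (E x)) (\<lambda>u. fh P E g n y (t - u)))"
    using False by (simp add: fh_Suc[where E=E, OF E])
  also have "\<dots> = (\<Sum>y\<in>UNIV. pmf (P x) y * (\<Sum>n<N. integral\<^sup>L (Expd (E x)) (\<lambda>u. fh P E g n y (t - u))))"
    by (subst sum.swap) (simp add: sum_distrib_left)
  also have "\<dots> = (\<Sum>y\<in>UNIV. pmf (P x) y * integral\<^sup>L (Expd (E x)) (\<lambda>u. FF P E g N y (t - u)))"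
    unfolding FF_def
    by (intro sum.cong refl arg_cong2[where f="(*)"]) (subst Bochner_Integration.integral_sum, auto intro: integrable_fh[where E=E, OF E E])
  also have "\<dots> = (\<Sum>y\<in>UNIV. integral\<^sup>L (Expd (E x)) (\<lambda>u. pmf (P x) y * FF P E g N y (t - u)))"
    by simp
  also have "\<dots> = integral\<^sup>L (Expd (E x)) (\<lambda>u. \<Sum>y\<in>UNIV. pmf (P x) y * FF P E g N y (t - u))"
    by (subst Bochner_Integration.integral_sum) (auto intro: integrable_FF[where E=E, OF E E])
  finally show ?thesis using False by simp
qed

lemma kappa_integral:
  fixes l c t :: real
  assumes "0 \<le> t"
  defines "\<kappa> \<equiv> (\<lambda>u. l * exp (- u * l) - (l - c) * exp (- c * t - (l - c) * u))"
  shows "integrable lborel (\<lambda>u. indicator {0..t} u * \<kappa> u)"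
    "(\<integral>u. indicator {0..t} u * \<kappa> u \<partial>lborel) = 1 - exp (- c * t)"
proof -
  have cont: "continuous_on {0..t} \<kappa>"
    unfolding \<kappa>_def by (intro continuous_intros)
  show int: "integrable lborel (\<lambda>u. indicator {0..t} u * \<kappa> u)"
    using borel_integrable_compact[OF compact_Icc cont] by simp
  define K where "K u = - exp (- u * l) + exp (- c * t - (l - c) * u)" for u
  have deriv: "(K has_vector_derivative \<kappa> u) (at u within {0..t})" for u
    unfolding K_def \<kappa>_def has_real_derivative_iff_has_vector_derivative[symmetric]
    by (auto intro!: derivative_eq_intros simp: algebra_simps)
  have "(\<kappa> has_integral (K t - K 0)) {0..t}"
    by (rule fundamental_theorem_of_calculus) (use assms deriv in auto)
  moreover have "K t - K 0 = 1 - exp (- c * t)"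
    unfolding K_def by (simp add: algebra_simps)
  ultimately have hi: "(\<kappa> has_integral (1 - exp (- c * t))) {0..t}" by simp
  have si: "set_integrable lborel {0..t} \<kappa>"
    unfolding set_integrable_def using int by simp
  have "(LINT u : {0..t} | lborel. \<kappa> u) = integral {0..t} \<kappa>"
    by (rule set_borel_integral_eq_integral(2)[OF si])
  also have "\<dots> = 1 - exp (- c * t)" using hi by (rule integral_unique)
  finally show "(\<integral>u. indicator {0..t} u * \<kappa> u \<partial>lborel) = 1 - exp (- c * t)"
    by (simp add: set_lebesgue_integral_def)
qed

lemma pw_case_le:
  fixes l l' a b Z X X0 :: real
  assumes "0 < l" "l \<le> l'" "0 \<le> a" "a \<le> 1" "0 \<le> b" "b \<le> 1" "0 < Z" "Z \<le> 1"
    "a - b \<le> 1 - X" "X0 \<le> Z * X"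
  shows "l * a - l' * Z * b \<le> l * (1 - X0)"
proof -
  have "l' * Z * b \<ge> l * Z * b"
    using assms by (intro mult_right_mono) auto
  moreover have "a - Z * b \<le> 1 - Z * X"
  proof -
    have "Z * b \<ge> Z * (a - 1 + X)" using assms by (intro mult_left_mono) auto
    then have "a - Z * b \<le> a * (1 - Z) + Z * (1 - X)" by (simp add: algebra_simps)
    also have "\<dots> \<le> 1 * (1 - Z) + Z * (1 - X)" using assms by (intro add_right_mono mult_right_mono) auto
    finally show ?thesis by (simp add: algebra_simps)
  qed
  then have "l * (a - Z * b) \<le> l * (1 - X0)"
    using assms by (intro mult_left_mono) auto
  ultimately show ?thesis by (simp add: algebra_simps)
qed

lemma pw_case_gt:
  fixes l l' a b Z X c :: real
  assumes "0 < l'" "l' < l" "l - l' \<le> c" "0 \<le> a" "a \<le> 1" "0 \<le> b" "b \<le> 1" "0 < Z" "Z \<le> 1"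
    "a - b \<le> 1 - X" "0 \<le> X"
  shows "l * Z * a - l' * b \<le> Z * (l - (l - c) * X)"
proof -
  define d where "d = l - l'"
  have l: "l = l' + d" unfolding d_def by simp
  have "l * Z * a = l' * Z * a + d * Z * a" unfolding l by (simp add: algebra_simps)
  also have "l' * Z * a \<le> l' * Z * (b + 1 - X)"
    using assms by (intro mult_left_mono) auto
  also have "d * Z * a \<le> d * Z * 1"
    using assms unfolding d_def by (intro mult_left_mono) auto
  finally have "l * Z * a - l' * b \<le> l' * b * (Z - 1) + l' * Z * (1 - X) + d * Z"
    by (simp add: algebra_simps)
  also have "l' * b * (Z - 1) \<le> 0"
    using assms by (intro mult_nonneg_nonpos) auto
  finally have "l * Z * a - l' * b \<le> Z * (l - l' * X)"
    unfolding d_def by (simp add: algebra_simps)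
  also have "Z * (l - l' * X) \<le> Z * (l - (l - c) * X)"
    using assms by (intro mult_left_mono) (auto intro: mult_right_mono)
  finally show ?thesis .
qed

lemma pw_case_same:
  fixes l q eps a b X :: real
  assumes "0 < l" "l \<le> q" "0 \<le> eps" "a - b \<le> 1 - (1 - eps) * X" "0 \<le> X"
  shows "l * (a - b) \<le> l - (l - q * eps) * X"
proof -
  have "l * (a - b) \<le> l * (1 - (1 - eps) * X)" using assms by (intro mult_left_mono) auto
  also have "\<dots> = l - l * (1 - eps) * X" by (simp add: algebra_simps)
  moreover have "l * (1 - eps) * X \<ge> (l - q * eps) * X"
  proof -
    have "eps * l \<le> eps * q" using assms by (intro mult_left_mono) auto
    then have "l - q * eps \<le> l * (1 - eps)" by (simp add: algebra_simps)
    then show ?thesis using assms by (intro mult_right_mono) auto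
  qed
  ultimately show ?thesis by simp
qed


lemma exp_split: "exp (- c * t - (l - c) * u) = (exp::real\<Rightarrow>real) (- u * l) * exp (- c * (t - u))"
proof -
  have "- c * t - (l - c) * u = - u * l + - c * (t - u)" by (simp add: algebra_simps)
  then show ?thesis by (simp only: exp_add)
qed

lemma kappa_eq: "(l::real) * exp (- u * l) - (l - c) * exp (- c * t - (l - c) * u) = exp (- u * l) * (l - (l - c) * exp (- c * (t - u)))"
  unfolding exp_split by (simp add: algebra_simps)

lemma expd_pos: "0 \<le> u \<Longrightarrow> exponential_density l u = l * exp (- u * l)"
  by (simp add: exponential_density_def)

lemma step_same:
  fixes a b :: "real \<Rightarrow> real"
  assumes l: "0 < l" "l \<le> q" and eps: "0 \<le> \<epsilon>" and t: "0 \<le> t"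
    and ma[measurable]: "a \<in> borel_measurable borel" and mb[measurable]: "b \<in> borel_measurable borel"
    and ba: "\<And>\<tau>. \<bar>a \<tau>\<bar> \<le> 1" and bb: "\<And>\<tau>. \<bar>b \<tau>\<bar> \<le> 1"
    and na: "\<And>\<tau>. \<tau> < 0 \<Longrightarrow> a \<tau> = 0" and nb: "\<And>\<tau>. \<tau> < 0 \<Longrightarrow> b \<tau> = 0"
    and diff: "\<And>\<tau>. 0 \<le> \<tau> \<Longrightarrow> a \<tau> - b \<tau> \<le> 1 - (1 - \<epsilon>) * exp (- (q * \<epsilon>) * \<tau>)"
  shows "integral\<^sup>L (Expd l) (\<lambda>u. a (t - u)) - integral\<^sup>L (Expd l) (\<lambda>u. b (t - u)) \<le> 1 - exp (- (q * \<epsilon>) * t)"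
proof -
  define c where "c = q * \<epsilon>"
  define \<kappa> where "\<kappa> = (\<lambda>u. l * exp (- u * l) - (l - c) * exp (- c * t - (l - c) * u))"
  have ia: "integral\<^sup>L (Expd l) (\<lambda>u. a (t - u)) = (\<integral>u. exponential_density l u * a (t - u) \<partial>lborel)"
    by (rule int_Expd) (use l in auto)
  have ib: "integral\<^sup>L (Expd l) (\<lambda>u. b (t - u)) = (\<integral>u. exponential_density l u * b (t - u) \<partial>lborel)"
    by (rule int_Expd) (use l in auto)
  have Ia: "integrable lborel (\<lambda>u. exponential_density l u * a (t - u))"
    by (rule integrable_Expd_lborel[where B=1]) (use l ba in auto)
  have Ib: "integrable lborel (\<lambda>u. exponential_density l u * b (t - u))"
    by (rule integrable_Expd_lborel[where B=1]) (use l bb in auto)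
  have pw: "exponential_density l u * a (t - u) - exponential_density l u * b (t - u) \<le> indicator {0..t} u * \<kappa> u" for u
  proof (cases "u < 0")
    case True then show ?thesis by (simp add: exponential_density_def)
  next
    case False
    show ?thesis
    proof (cases "u \<le> t")
      case False then show ?thesis using na nb by simp
    next
      case True
      have "l * (a (t - u) - b (t - u)) \<le> l - (l - q * \<epsilon>) * exp (- c * (t - u))"
        by (rule pw_case_same) (use l eps diff[of "t - u"] True c_def in auto)
      then have "exp (- u * l) * (l * (a (t - u) - b (t - u))) \<le> exp (- u * l) * (l - (l - c) * exp (- c * (t - u)))"
        unfolding c_def by (intro mult_left_mono) auto
      moreover have "exponential_density l u * a (t - u) - exponential_density l u * b (t - u) = exp (- u * l) * (l * (a (t - u) - b (t - u)))"
        using \<open>\<not> u < 0\<close> by (simp add: expd_pos algebra_simps)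
      ultimately show ?thesis using True \<open>\<not> u < 0\<close>
        unfolding \<kappa>_def kappa_eq by simp
    qed
  qed
  have "integral\<^sup>L (Expd l) (\<lambda>u. a (t - u)) - integral\<^sup>L (Expd l) (\<lambda>u. b (t - u))
     = (\<integral>u. exponential_density l u * a (t - u) - exponential_density l u * b (t - u) \<partial>lborel)"
    unfolding ia ib by (rule Bochner_Integration.integral_diff[OF Ia Ib, symmetric])
  also have "\<dots> \<le> (\<integral>u. indicator {0..t} u * \<kappa> u \<partial>lborel)"
    by (rule integral_mono[OF _ _ pw]) (use Ia Ib kappa_integral(1)[OF t, of l c] \<kappa>_def in auto)
  also have "\<dots> = 1 - exp (- c * t)"
    using kappa_integral(2)[OF t, of l c] \<kappa>_def by simp
  finally show ?thesis unfolding c_def .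
qed

lemma int_const_Expd: "0 < l \<Longrightarrow> (\<integral>u. exponential_density l u * C \<partial>lborel) = C"
proof -
  assume l: "0 < l"
  interpret prob_space "Expd l" using l by (rule prob_Expd)
  have "integral\<^sup>L (Expd l) (\<lambda>u. C) = (\<integral>u. exponential_density l u * C \<partial>lborel)"
    by (rule int_Expd) (use l in auto)
  moreover have "measure (Expd l) (space (Expd l)) = 1" by (rule prob_space)
  ultimately show ?thesis by simp
qed

lemma step_diff:
  fixes a b :: "real \<Rightarrow> real"
  assumes l: "0 < l" "0 < l'" "\<bar>l - l'\<bar> \<le> c" and t: "0 \<le> t"
    and ma[measurable]: "a \<in> borel_measurable borel" and mb[measurable]: "b \<in> borel_measurable borel"
    and ba: "\<And>\<tau>. 0 \<le> a \<tau> \<and> a \<tau> \<le> 1" and bb: "\<And>\<tau>. 0 \<le> b \<tau> \<and> b \<tau> \<le> 1"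
    and na: "\<And>\<tau>. \<tau> < 0 \<Longrightarrow> a \<tau> = 0" and nb: "\<And>\<tau>. \<tau> < 0 \<Longrightarrow> b \<tau> = 0"
    and diff: "\<And>\<tau>. 0 \<le> \<tau> \<Longrightarrow> a \<tau> - b \<tau> \<le> 1 - exp (- c * \<tau>)"
  shows "integral\<^sup>L (Expd l) (\<lambda>u. a (t - u)) - integral\<^sup>L (Expd l') (\<lambda>u. b (t - u)) \<le> 1 - exp (- c * t)"
proof -
  have ia: "integral\<^sup>L (Expd l) (\<lambda>u. a (t - u)) = (\<integral>u. exponential_density l u * a (t - u) \<partial>lborel)"
    by (rule int_Expd) (use l in auto)
  have ib: "integral\<^sup>L (Expd l') (\<lambda>u. b (t - u)) = (\<integral>u. exponential_density l' u * b (t - u) \<partial>lborel)"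
    by (rule int_Expd) (use l in auto)
  have Ia: "integrable lborel (\<lambda>u. exponential_density l u * a (t - u))"
    by (rule integrable_Expd_lborel[where B=1]) (use l ba in \<open>auto simp: abs_le_iff\<close>)
  have Ib: "integrable lborel (\<lambda>u. exponential_density l' u * b (t - u))"
    by (rule integrable_Expd_lborel[where B=1]) (use l bb in \<open>auto simp: abs_le_iff\<close>)
  have eq: "integral\<^sup>L (Expd l) (\<lambda>u. a (t - u)) - integral\<^sup>L (Expd l') (\<lambda>u. b (t - u))
     = (\<integral>u. exponential_density l u * a (t - u) - exponential_density l' u * b (t - u) \<partial>lborel)"
    unfolding ia ib by (rule Bochner_Integration.integral_diff[OF Ia Ib, symmetric])
  show ?thesis
  proof (cases "l \<le> l'")
    case True
    have pw: "exponential_density l u * a (t - u) - exponential_density l' u * b (t - u)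
        \<le> exponential_density l u * (1 - exp (- c * t))" for u
    proof (cases "u < 0")
      case True then show ?thesis by (simp add: exponential_density_def)
    next
      case False
      show ?thesis
      proof (cases "u \<le> t")
        case False
        have "0 \<le> exponential_density l u * (1 - exp (- c * t))"
          using l t abs_ge_zero[of "l - l'"] by (intro mult_nonneg_nonneg expd_nonneg) auto
        then show ?thesis using na nb False by simp
      next
        case ut: True
        define Z where "Z = exp (- (l' - l) * u)"
        have "(l - l') * u \<le> 0" using \<open>l \<le> l'\<close> False by (intro mult_nonpos_nonneg) auto
        then have "0 < Z" "Z \<le> 1" unfolding Z_def by auto
        have "exp (- c * t) \<le> Z * exp (- c * (t - u))"
        proof -
          have "(l' - l) * u \<le> c * u" using l \<open>l \<le> l'\<close> False by (intro mult_right_mono) auto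
          then show ?thesis unfolding Z_def exp_add[symmetric] by (simp add: algebra_simps)
        qed
        then have "l * a (t - u) - l' * Z * b (t - u) \<le> l * (1 - exp (- c * t))"
          by (intro pw_case_le) (use l True ba bb diff[of "t - u"] ut False \<open>0 < Z\<close> \<open>Z \<le> 1\<close> in auto)
        then have "exp (- u * l) * (l * a (t - u) - l' * Z * b (t - u)) \<le> exp (- u * l) * (l * (1 - exp (- c * t)))"
          by (intro mult_left_mono) auto
        moreover have "exp (- u * l') = exp (- u * l) * Z"
          unfolding Z_def exp_add[symmetric] by (simp add: algebra_simps)
        moreover have "exponential_density l u * a (t - u) - exponential_density l' u * b (t - u)
           = exp (- u * l) * (l * a (t - u)) - exp (- u * l') * (l' * b (t - u))"
          using False by (simp add: expd_pos algebra_simps)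
        ultimately show ?thesis using False
          by (simp add: expd_pos algebra_simps)
      qed
    qed
    have "integral\<^sup>L (Expd l) (\<lambda>u. a (t - u)) - integral\<^sup>L (Expd l') (\<lambda>u. b (t - u))
       \<le> (\<integral>u. exponential_density l u * (1 - exp (- c * t)) \<partial>lborel)"
      unfolding eq
      by (rule integral_mono[OF _ _ pw])
         (use Ia Ib integrable_Expd_lborel[where B="\<bar>1 - exp (- c * t)\<bar>" and l=l and f="\<lambda>_. 1 - exp (- c * t)"] l in auto)
    also have "\<dots> = 1 - exp (- c * t)" by (rule int_const_Expd[OF l(1)])
    finally show ?thesis .
  next
    case False
    define \<kappa> where "\<kappa> = (\<lambda>u. l * exp (- u * l) - (l - c) * exp (- c * t - (l - c) * u))"
    have pw: "exponential_density l u * a (t - u) - exponential_density l' u * b (t - u) \<le> indicator {0..t} u * \<kappa> u" for u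
    proof (cases "u < 0")
      case True then show ?thesis by (simp add: exponential_density_def)
    next
      case u0: False
      show ?thesis
      proof (cases "u \<le> t")
        case False then show ?thesis using na nb by simp
      next
        case True
        define Z where "Z = exp (- (l - l') * u)"
        have "(l' - l) * u \<le> 0" using \<open>\<not> l \<le> l'\<close> u0 by (intro mult_nonpos_nonneg) auto
        then have "0 < Z" "Z \<le> 1" unfolding Z_def by auto
        have "l * Z * a (t - u) - l' * b (t - u) \<le> Z * (l - (l - c) * exp (- c * (t - u)))"
          by (rule pw_case_gt) (use l False ba bb diff[of "t - u"] True \<open>0 < Z\<close> \<open>Z \<le> 1\<close> in auto)
        then have "exp (- u * l') * (l * Z * a (t - u) - l' * b (t - u)) \<le> exp (- u * l') * (Z * (l - (l - c) * exp (- c * (t - u))))"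
          by (intro mult_left_mono) auto
        moreover have "exp (- u * l) = exp (- u * l') * Z"
          unfolding Z_def exp_add[symmetric] by (simp add: algebra_simps)
        moreover have "exponential_density l u * a (t - u) - exponential_density l' u * b (t - u)
           = exp (- u * l) * (l * a (t - u)) - exp (- u * l') * (l' * b (t - u))"
          using u0 by (simp add: expd_pos algebra_simps)
        ultimately show ?thesis using True u0
          unfolding \<kappa>_def kappa_eq by (simp add: algebra_simps)
      qed
    qed
    have "integral\<^sup>L (Expd l) (\<lambda>u. a (t - u)) - integral\<^sup>L (Expd l') (\<lambda>u. b (t - u))
       \<le> (\<integral>u. indicator {0..t} u * \<kappa> u \<partial>lborel)"
      unfolding eq
      by (rule integral_mono[OF _ _ pw]) (use Ia Ib kappa_integral(1)[OF t, of l c] \<kappa>_def in auto)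
    also have "\<dots> = 1 - exp (- c * t)"
      using kappa_integral(2)[OF t, of l c] \<kappa>_def by simp
    finally show ?thesis .
  qed
qed

lemma meas_Ico: "l \<le> u \<Longrightarrow> measure lborel {l..<u::real} = u - l"
  by (simp add: measure_def)

lemma meas_int1: "0 \<le> D \<Longrightarrow> D \<le> 1 \<Longrightarrow> a \<le> 1 \<Longrightarrow>
   measure lborel ({D..1} \<inter> {..<a::real}) = max 0 (a - D)"
proof (cases "D < a")
  case True
  assume "a \<le> 1"
  then have "{D..1} \<inter> {..<a} = {D..<a}" by auto
  then show ?thesis using True by (simp add: meas_Ico)
next
  case False
  then have "{D..1} \<inter> {..<a} = {}" by auto
  then show ?thesis using False by simp
qed

lemma meas_int2:
  assumes "0 \<le> D" "D \<le> 1" "0 \<le> a"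
  shows "measure lborel ({D..1} \<inter> {..<a + D::real}) = min a (1 - D)"
proof (cases "a + D \<le> 1")
  case True
  note \<open>0 \<le> a\<close>
  then have "{D..1} \<inter> {..<a + D} = {D..<a + D}" using True by auto
  then show ?thesis using True \<open>0 \<le> a\<close> by (simp add: meas_Ico)
next
  case False
  have "{D..1} \<inter> {..<a + D} = {D..1}"
    using False by auto
  then show ?thesis using False assms by simp
qed

lemma int_step:
  fixes w :: "'s::finite \<Rightarrow> real" and B :: "'s \<Rightarrow> real set"
  assumes "\<And>y. B y \<in> sets borel" "\<And>y. B y \<subseteq> {a..b}"
  shows "integrable lborel (\<lambda>c. \<Sum>y\<in>UNIV. w y * indicator (B y) c)"
    "(\<integral>c. (\<Sum>y\<in>UNIV. w y * indicator (B y) c) \<partial>lborel) = (\<Sum>y\<in>UNIV. w y * measure lborel (B y))"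
proof -
  have fin: "emeasure lborel (B y) < \<infinity>" for y
  proof -
    have "emeasure lborel (B y) \<le> emeasure lborel {a..b}"
      using assms by (intro emeasure_mono) auto
    moreover have "emeasure lborel {a..b} < \<infinity>"
      by (rule emeasure_compact_finite) simp
    ultimately show ?thesis by (simp add: order_le_less_trans)
  qed
  have int: "integrable lborel (indicator (B y) :: real \<Rightarrow> real)" for y
    using fin assms by (simp add: integrable_indicator_iff)
  show "integrable lborel (\<lambda>c. \<Sum>y\<in>UNIV. w y * indicator (B y) c)"
    by (intro Bochner_Integration.integrable_sum integrable_mult_right int)
  show "(\<integral>c. (\<Sum>y\<in>UNIV. w y * indicator (B y) c) \<partial>lborel) = (\<Sum>y\<in>UNIV. w y * measure lborel (B y))"
    using int by (subst Bochner_Integration.integral_sum) auto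
qed

lemma layer:
  fixes p p' :: "'s::finite pmf" and h :: "'s \<Rightarrow> real"
  assumes h0: "\<And>y. 0 \<le> h y" and h1: "\<And>y. h y \<le> 1" and D: "0 \<le> D" "D \<le> 1" and eps: "0 \<le> \<epsilon>"
    and lip: "\<And>y y'. (y, y') \<in> R \<Longrightarrow> h y \<le> h y' + D"
    and setc: "\<And>A. measure_pmf.prob p A \<le> measure_pmf.prob p' (R `` A) + \<epsilon>"
  shows "(\<Sum>y\<in>UNIV. pmf p y * h y) \<le> (\<Sum>y\<in>UNIV. pmf p' y * h y) + D + \<epsilon> * (1 - D)"
proof -
  have sp: "(\<Sum>y\<in>UNIV. pmf p y) = 1" by (rule sum_pmf_eq_1) auto
  have sp': "(\<Sum>y\<in>UNIV. pmf p' y) = 1" by (rule sum_pmf_eq_1) auto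
  have split: "h y = min (h y) D + max 0 (h y - D)" for y by auto
  have A: "(\<Sum>y\<in>UNIV. pmf p y * min (h y) D) \<le> D"
  proof -
    have "(\<Sum>y\<in>UNIV. pmf p y * min (h y) D) \<le> (\<Sum>y\<in>UNIV. pmf p y * D)"
      by (intro sum_mono mult_left_mono) auto
    also have "\<dots> = D" using sp by (simp add: sum_distrib_right[symmetric])
    finally show ?thesis .
  qed
  define T where "T c = (\<Sum>y\<in>UNIV. pmf p y * indicator ({D..1} \<inter> {..<h y}) c)" for c :: real
  define T' where "T' c = (\<Sum>y\<in>UNIV. pmf p' y * indicator ({D..1} \<inter> {..<h y + D}) c) + \<epsilon> * indicator {D..1} c" for c :: real
  have Tint: "integrable lborel T" "integral\<^sup>L lborel T = (\<Sum>y\<in>UNIV. pmf p y * max 0 (h y - D))"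
    unfolding T_def using int_step[of "\<lambda>y. {D..1} \<inter> {..<h y}" D 1 "pmf p"]
    by (auto simp: meas_int1 D h1)
  have T'1: "integrable lborel (\<lambda>c. \<Sum>y\<in>UNIV. pmf p' y * indicator ({D..1} \<inter> {..<h y + D}) c)"
     "(\<integral>c. (\<Sum>y\<in>UNIV. pmf p' y * indicator ({D..1} \<inter> {..<h y + D}) c) \<partial>lborel) = (\<Sum>y\<in>UNIV. pmf p' y * min (h y) (1 - D))"
    using int_step[of "\<lambda>y. {D..1} \<inter> {..<h y + D}" D 1 "pmf p'"]
    by (auto simp: meas_int2 D h0)
  have i2: "integrable lborel (\<lambda>c. \<epsilon> * indicator {D..1} c :: real)"
    using emeasure_compact_finite[of "{D..1::real}"] by (auto simp: integrable_indicator_iff)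
  have T'int: "integrable lborel T'" "integral\<^sup>L lborel T' = (\<Sum>y\<in>UNIV. pmf p' y * min (h y) (1 - D)) + \<epsilon> * (1 - D)"
    unfolding T'_def using T'1 i2 D by (auto simp: meas_Ico)
  have pw: "T c \<le> T' c" for c
  proof (cases "c \<in> {D..1}")
    case False
    then have "T c = 0" "T' c = 0" unfolding T_def T'_def by (auto simp: indicator_def)
    then show ?thesis by simp
  next
    case True
    have "T c = measure_pmf.prob p {y. c < h y}"
      unfolding T_def using True
      by (subst measure_measure_pmf_finite) (auto simp: indicator_def intro!: sum.mono_neutral_cong_right)
    also have "\<dots> \<le> measure_pmf.prob p' (R `` {y. c < h y}) + \<epsilon>" by (rule setc)
    also have "\<dots> \<le> measure_pmf.prob p' {y. c < h y + D} + \<epsilon>"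
      using lip by (intro add_right_mono measure_pmf.finite_measure_mono) force+
    also have "\<dots> = T' c"
      unfolding T'_def using True
      by (subst measure_measure_pmf_finite) (auto simp: indicator_def intro!: sum.mono_neutral_cong_right)
    finally show ?thesis .
  qed
  have "(\<Sum>y\<in>UNIV. pmf p y * max 0 (h y - D)) \<le> (\<Sum>y\<in>UNIV. pmf p' y * min (h y) (1 - D)) + \<epsilon> * (1 - D)"
    using integral_mono[OF Tint(1) T'int(1) pw] Tint(2) T'int(2) by simp
  also have "(\<Sum>y\<in>UNIV. pmf p' y * min (h y) (1 - D)) \<le> (\<Sum>y\<in>UNIV. pmf p' y * h y)"
    by (intro sum_mono mult_left_mono) auto
  finally have B: "(\<Sum>y\<in>UNIV. pmf p y * max 0 (h y - D)) \<le> (\<Sum>y\<in>UNIV. pmf p' y * h y) + \<epsilon> * (1 - D)"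
    by simp
  have "(\<Sum>y\<in>UNIV. pmf p y * h y) = (\<Sum>y\<in>UNIV. pmf p y * min (h y) D) + (\<Sum>y\<in>UNIV. pmf p y * max 0 (h y - D))"
    by (subst split) (simp add: distrib_left sum.distrib)
  then show ?thesis using A B by simp
qed

lemma integrable_H:
  assumes E: "\<And>x. 0 < E x" and l: "0 < l"
  shows "integrable (Expd l) (\<lambda>u. \<Sum>y\<in>UNIV. pmf (P x) y * FF P E g N y (t - u))"
  using integrable_FF[where E=E, OF E l] by auto

lemma H_meas:
  assumes E: "\<And>x. 0 < E x"
  shows "(\<lambda>\<tau>. \<Sum>y\<in>UNIV. pmf (P x) y * FF P E g N y \<tau>) \<in> borel_measurable borel"
proof -
  have [measurable]: "\<And>y. FF P E g N y \<in> borel_measurable borel" by (rule FF_meas[where E=E, OF E])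
  show ?thesis by measurable
qed

lemma H_bounds:
  fixes p :: "'s::finite pmf"
  assumes "\<And>y. 0 \<le> f y \<and> f y \<le> 1"
  shows "0 \<le> (\<Sum>y\<in>UNIV. pmf p y * f y) \<and> (\<Sum>y\<in>UNIV. pmf p y * f y) \<le> 1"
proof
  show "0 \<le> (\<Sum>y\<in>UNIV. pmf p y * f y)" using assms by (auto intro: sum_nonneg)
  have "(\<Sum>y\<in>UNIV. pmf p y * f y) \<le> (\<Sum>y\<in>UNIV. pmf p y * 1)"
    using assms by (intro sum_mono mult_left_mono) auto
  also have "\<dots> = 1" by (simp add: sum_pmf_eq_1)
  finally show "(\<Sum>y\<in>UNIV. pmf p y * f y) \<le> 1" .
qed

lemma FF_props:
  assumes E: "\<And>x. 0 < E x"
  shows "0 \<le> FF P E g N x t \<and> FF P E g N x t \<le> 1 \<and> (t < 0 \<longrightarrow> FF P E g N x t = 0)"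
proof (induction N arbitrary: x t)
  case 0
  then show ?case by (simp add: FF_def)
next
  case (Suc N)
  show ?case
  proof (cases "x = g")
    case True
    then show ?thesis by (simp add: FF_Suc[where E=E, OF E])
  next
    case False
    define H where "H \<tau> = (\<Sum>y\<in>UNIV. pmf (P x) y * FF P E g N y \<tau>)" for \<tau>
    have FFeq: "FF P E g (Suc N) x t = integral\<^sup>L (Expd (E x)) (\<lambda>u. H (t - u))"
      using False by (simp add: FF_Suc[where E=E, OF E] H_def)
    have Hb: "0 \<le> H \<tau> \<and> H \<tau> \<le> 1" for \<tau>
      unfolding H_def by (rule H_bounds) (use Suc.IH in auto)
    have Hn: "H \<tau> = 0" if "\<tau> < 0" for \<tau>
      unfolding H_def using Suc.IH that by simp
    interpret prob_space "Expd (E x)" using E by (rule prob_Expd)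
    have int: "integrable (Expd (E x)) (\<lambda>u. H (t - u))"
      unfolding H_def by (rule integrable_H[where E=E, OF E E])
    have Hm[measurable]: "H \<in> borel_measurable borel"
      unfolding H_def[abs_def] by (rule H_meas[where E=E, OF E])
    have "0 \<le> integral\<^sup>L (Expd (E x)) (\<lambda>u. H (t - u))"
      using Hb by (intro integral_nonneg_AE) auto
    moreover have "integral\<^sup>L (Expd (E x)) (\<lambda>u. H (t - u)) \<le> 1"
      using Hb by (intro integral_le_const int) auto
    moreover have "integral\<^sup>L (Expd (E x)) (\<lambda>u. H (t - u)) = 0" if "t < 0"
    proof -
      have "integral\<^sup>L (Expd (E x)) (\<lambda>u. H (t - u)) = (\<integral>u. exponential_density (E x) u * H (t - u) \<partial>lborel)"
        by (rule int_Expd) (use E in auto)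
      also have "(\<lambda>u. exponential_density (E x) u * H (t - u)) = (\<lambda>u. 0)"
      proof
        fix u
        show "exponential_density (E x) u * H (t - u) = 0"
          using Hn[of "t - u"] that by (cases "u < 0") (auto simp: exponential_density_def)
      qed
      finally show ?thesis by simp
    qed
    ultimately show ?thesis unfolding FFeq by auto
  qed
qed

lemma bisim_props:
  assumes R: "eps_delta_bisim P E L \<epsilon> \<delta> R" and xy: "(x, y) \<in> R"
  shows "L x = L y" "\<bar>ln (E x) - ln (E y)\<bar> \<le> \<delta>"
    "\<And>A. measure_pmf.prob (P x) A \<le> measure_pmf.prob (P y) (R `` A) + \<epsilon>"
    "(y, x) \<in> R"
  using R xy unfolding eps_delta_bisim_def by (auto dest: symD)

lemma goal_cases:
  assumes std: "standing_assm P L g" and R: "eps_delta_bisim P E L \<epsilon> \<delta> R" and xy: "(x, y) \<in> R"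
  shows "x = g \<longleftrightarrow> y = g"
proof -
  have "L x = L y" by (rule bisim_props(1)[OF R xy])
  then show ?thesis using std unfolding standing_assm_def by metis
qed

lemma main1:
  assumes E: "\<And>x. 0 < E x" and std: "standing_assm P L g" and R: "eps_delta_bisim P E L \<epsilon> 0 R"
    and eps: "0 \<le> \<epsilon>" and q: "\<And>x. E x \<le> q"
  shows "(x, x') \<in> R \<Longrightarrow> 0 \<le> t \<Longrightarrow> FF P E g N x t - FF P E g N x' t \<le> 1 - exp (- (q * \<epsilon>) * t)"
proof (induction N arbitrary: x x' t)
  case 0
  have "0 \<le> q" using E[of x] q[of x] by simp
  then have "0 \<le> q * \<epsilon> * t" using eps 0 by simp
  then show ?case by (simp add: FF_def)
next
  case (Suc N)
  have q0: "0 \<le> q" using E[of x] q[of x] by simp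
  have B0: "0 \<le> 1 - exp (- (q * \<epsilon>) * \<tau>)" "1 - exp (- (q * \<epsilon>) * \<tau>) \<le> 1" if "0 \<le> \<tau>" for \<tau>
    using q0 eps that by (auto simp: mult_nonneg_nonneg)
  show ?case
  proof (cases "x = g")
    case True
    then have "x' = g" using goal_cases[OF std R Suc.prems(1)] by simp
    then show ?thesis using True B0[OF Suc.prems(2)] by simp
  next
    case False
    then have x'g: "x' \<noteq> g" using goal_cases[OF std R Suc.prems(1)] by simp
    have "\<bar>ln (E x) - ln (E x')\<bar> \<le> 0" by (rule bisim_props(2)[OF R Suc.prems(1)])
    then have "ln (E x) = ln (E x')" by simp
    then have Exx: "E x = E x'" using E[of x] E[of x'] by simp
    define H where "H z \<tau> = (\<Sum>y\<in>UNIV. pmf (P z) y * FF P E g N y \<tau>)" for z \<tau>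
    have FFeq: "FF P E g (Suc N) z t = integral\<^sup>L (Expd (E z)) (\<lambda>u. H z (t - u))" if "z \<noteq> g" for z
      using that by (simp add: FF_Suc[where E=E, OF E] H_def)
    have FFb: "0 \<le> FF P E g N y \<tau> \<and> FF P E g N y \<tau> \<le> 1" for y \<tau>
      using FF_props[where E=E, OF E] by blast
    have Hb: "0 \<le> H z \<tau> \<and> H z \<tau> \<le> 1" for z \<tau>
      unfolding H_def by (rule H_bounds) (use FFb in auto)
    have Hn: "H z \<tau> = 0" if "\<tau> < 0" for z \<tau>
      unfolding H_def using FF_props[where E=E, OF E] that by simp
    have Hm: "H z \<in> borel_measurable borel" for z
      unfolding H_def[abs_def] by (rule H_meas[where E=E, OF E])
    have Hdiff: "H x \<tau> - H x' \<tau> \<le> 1 - (1 - \<epsilon>) * exp (- (q * \<epsilon>) * \<tau>)" if "0 \<le> \<tau>" for \<tau>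
    proof -
      have "H x \<tau> \<le> H x' \<tau> + (1 - exp (- (q * \<epsilon>) * \<tau>)) + \<epsilon> * (1 - (1 - exp (- (q * \<epsilon>) * \<tau>)))"
        unfolding H_def
      proof (rule layer)
        show "0 \<le> FF P E g N y \<tau>" "FF P E g N y \<tau> \<le> 1" for y using FFb by auto
        show "0 \<le> 1 - exp (- (q * \<epsilon>) * \<tau>)" "1 - exp (- (q * \<epsilon>) * \<tau>) \<le> 1" using B0 that by auto
        show "0 \<le> \<epsilon>" by (rule eps)
        show "FF P E g N y \<tau> \<le> FF P E g N y' \<tau> + (1 - exp (- (q * \<epsilon>) * \<tau>))" if "(y, y') \<in> R" for y y'
          using Suc.IH[OF that \<open>0 \<le> \<tau>\<close>] by simp
        show "measure_pmf.prob (P x) A \<le> measure_pmf.prob (P x') (R `` A) + \<epsilon>" for A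
          by (rule bisim_props(3)[OF R Suc.prems(1)])
      qed
      then show ?thesis by (simp add: algebra_simps)
    qed
    have "integral\<^sup>L (Expd (E x)) (\<lambda>u. H x (t - u)) - integral\<^sup>L (Expd (E x)) (\<lambda>u. H x' (t - u))
        \<le> 1 - exp (- (q * \<epsilon>) * t)"
      by (rule step_same[OF E q eps Suc.prems(2) Hm Hm]) (use Hb Hn Hdiff in \<open>auto simp: abs_le_iff\<close>)
    then show ?thesis using FFeq[OF False] FFeq[OF x'g] Exx by simp
  qed
qed

lemma rate_diff:
  fixes a b q \<delta> :: real
  assumes "0 < a" "0 < b" "\<bar>ln a - ln b\<bar> \<le> \<delta>" "a \<le> q" "b \<le> q" "0 \<le> \<delta>"
  shows "\<bar>a - b\<bar> \<le> q * (exp \<delta> - 1)"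
proof -
  have key: "x - y \<le> q * (exp \<delta> - 1)" if "0 < x" "0 < y" "ln x - ln y \<le> \<delta>" "y \<le> q" for x y :: real
  proof -
    have "x = exp (ln x)" using that by simp
    also have "\<dots> \<le> exp (ln y + \<delta>)" using that by (simp only: exp_le_cancel_iff)
    also have "\<dots> = y * exp \<delta>" using that by (simp add: exp_add)
    finally have "x - y \<le> y * (exp \<delta> - 1)" by (simp add: algebra_simps)
    also have "\<dots> \<le> q * (exp \<delta> - 1)"
      using that assms(6) by (intro mult_right_mono) auto
    finally show ?thesis .
  qed
  show ?thesis using key[of a b] key[of b a] assms by (auto simp: abs_le_iff)
qed

lemma main2:
  assumes E: "\<And>x. 0 < E x" and std: "standing_assm P L g" and R: "eps_delta_bisim P E L 0 \<delta> R"
    and del: "0 \<le> \<delta>" and q: "\<And>x. E x \<le> q"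
  shows "(x, x') \<in> R \<Longrightarrow> 0 \<le> t \<Longrightarrow> FF P E g N x t - FF P E g N x' t \<le> 1 - exp (- (q * (exp \<delta> - 1)) * t)"
proof (induction N arbitrary: x x' t)
  case 0
  have "0 \<le> q" using E[of x] q[of x] by simp
  moreover have "0 \<le> exp \<delta> - 1" using del by simp
  ultimately have "0 \<le> q * (exp \<delta> - 1) * t" using 0 by simp
  then show ?case by (simp add: FF_def)
next
  case (Suc N)
  define c where "c = q * (exp \<delta> - 1)"
  have q0: "0 \<le> q" using E[of x] q[of x] by simp
  have c0: "0 \<le> c" unfolding c_def using q0 del by simp
  have B0: "0 \<le> 1 - exp (- c * \<tau>)" "1 - exp (- c * \<tau>) \<le> 1" if "0 \<le> \<tau>" for \<tau>
    using c0 that by (auto simp: mult_nonneg_nonneg)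
  show ?case
  proof (cases "x = g")
    case True
    then have "x' = g" using goal_cases[OF std R Suc.prems(1)] by simp
    then show ?thesis using True B0[OF Suc.prems(2)] by (simp add: c_def)
  next
    case False
    then have x'g: "x' \<noteq> g" using goal_cases[OF std R Suc.prems(1)] by simp
    have Exx: "\<bar>E x - E x'\<bar> \<le> c"
      unfolding c_def by (rule rate_diff[OF E E bisim_props(2)[OF R Suc.prems(1)] q q del])
    define H where "H z \<tau> = (\<Sum>y\<in>UNIV. pmf (P z) y * FF P E g N y \<tau>)" for z \<tau>
    have FFeq: "FF P E g (Suc N) z t = integral\<^sup>L (Expd (E z)) (\<lambda>u. H z (t - u))" if "z \<noteq> g" for z
      using that by (simp add: FF_Suc[where E=E, OF E] H_def)
    have FFb: "0 \<le> FF P E g N y \<tau> \<and> FF P E g N y \<tau> \<le> 1" for y \<tau>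
      using FF_props[where E=E, OF E] by blast
    have Hb: "0 \<le> H z \<tau> \<and> H z \<tau> \<le> 1" for z \<tau>
      unfolding H_def by (rule H_bounds) (use FFb in auto)
    have Hn: "H z \<tau> = 0" if "\<tau> < 0" for z \<tau>
      unfolding H_def using FF_props[where E=E, OF E] that by simp
    have Hm: "H z \<in> borel_measurable borel" for z
      unfolding H_def[abs_def] by (rule H_meas[where E=E, OF E])
    have Hdiff: "H x \<tau> - H x' \<tau> \<le> 1 - exp (- c * \<tau>)" if "0 \<le> \<tau>" for \<tau>
    proof -
      have "H x \<tau> \<le> H x' \<tau> + (1 - exp (- c * \<tau>)) + 0 * (1 - (1 - exp (- c * \<tau>)))"
        unfolding H_def
      proof (rule layer)
        show "0 \<le> FF P E g N y \<tau>" "FF P E g N y \<tau> \<le> 1" for y using FFb by auto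
        show "0 \<le> 1 - exp (- c * \<tau>)" "1 - exp (- c * \<tau>) \<le> 1" using B0 that by auto
        show "0 \<le> (0::real)" by simp
        show "FF P E g N y \<tau> \<le> FF P E g N y' \<tau> + (1 - exp (- c * \<tau>))" if "(y, y') \<in> R" for y y'
          using Suc.IH[OF that \<open>0 \<le> \<tau>\<close>] by (simp add: c_def)
        show "measure_pmf.prob (P x) A \<le> measure_pmf.prob (P x') (R `` A) + 0" for A
          by (rule bisim_props(3)[OF R Suc.prems(1)])
      qed
      then show ?thesis by (simp add: algebra_simps)
    qed
    have "integral\<^sup>L (Expd (E x)) (\<lambda>u. H x (t - u)) - integral\<^sup>L (Expd (E x')) (\<lambda>u. H x' (t - u))
        \<le> 1 - exp (- c * t)"
      by (rule step_diff[OF E E Exx Suc.prems(2) Hm Hm]) (use Hb Hn Hdiff in auto)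
    then show ?thesis using FFeq[OF False] FFeq[OF x'g] by (simp add: c_def)
  qed
qed

lemma reach_lim:
  assumes E: "\<And>x. 0 < E x"
  shows "(\<lambda>N. FF P E g N x t) \<longlonglongrightarrow> reach_prob P E g x t"
proof -
  have "summable (\<lambda>n. fh P E g n x t)"
  proof (rule summableI_nonneg_bounded)
    show "0 \<le> fh P E g n x t" for n by (rule fh_nonneg[where E=E, OF E])
    show "(\<Sum>i<n. fh P E g i x t) \<le> 1" for n
      using FF_props[where E=E and g=g and N=n and x=x and t=t and P=P, OF E] by (simp add: FF_def)
  qed
  then have "(\<lambda>N. \<Sum>i<N. fh P E g i x t) \<longlonglongrightarrow> (\<Sum>n. fh P E g n x t)"
    by (rule summable_LIMSEQ)
  then show ?thesis unfolding FF_def reach_prob_def fh_def .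
qed

lemma reach_bound:
  assumes E: "\<And>x. 0 < E x" and B: "\<And>N. FF P E g N x t - FF P E g N x' t \<le> B"
  shows "reach_prob P E g x t - reach_prob P E g x' t \<le> B"
proof -
  have "(\<lambda>N. FF P E g N x t - FF P E g N x' t) \<longlonglongrightarrow> reach_prob P E g x t - reach_prob P E g x' t"
    by (intro tendsto_diff reach_lim[where E=E, OF E])
  then show ?thesis
    by (rule LIMSEQ_le_const2) (use B in auto)
qed

theorem corollary2:
  fixes P :: "'s::finite \<Rightarrow> 's pmf" and E :: "'s \<Rightarrow> real" and L :: "'s \<Rightarrow> 'l"
    and g s s' :: 's and \<epsilon> \<delta> q t :: real
  assumes "ctmc P E"
    and "standing_assm P L g"
    and "0 \<le> \<epsilon>" and "0 \<le> \<delta>"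
    and "q = Max (range E)"
    and "0 \<le> t"
    and "bisimilar P E L \<epsilon> \<delta> s s'"
  shows "(\<delta> = 0 \<longrightarrow> \<bar>reach_prob P E g s t - reach_prob P E g s' t\<bar> \<le> 1 - exp (- q * t * \<epsilon>))
       \<and> (\<epsilon> = 0 \<longrightarrow> \<bar>reach_prob P E g s t - reach_prob P E g s' t\<bar> \<le> 1 - exp (- q * t * (exp \<delta> - 1)))
       \<and> (\<epsilon> = 0 \<and> \<delta> = 0 \<longrightarrow> reach_prob P E g s t = reach_prob P E g s' t)"
proof -
  have E: "\<And>x. 0 < E x" using assms(1) by (simp add: ctmc_def)
  have q: "\<And>x. E x \<le> q" using assms(5) by (simp add: Max_ge)
  obtain R where R: "eps_delta_bisim P E L \<epsilon> \<delta> R" and ss: "(s, s') \<in> R"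
    using assms(7) unfolding bisimilar_def by blast
  have s's: "(s', s) \<in> R" by (rule bisim_props(4)[OF R ss])
  have P1: "\<bar>reach_prob P E g s t - reach_prob P E g s' t\<bar> \<le> 1 - exp (- q * t * \<epsilon>)" if d: "\<delta> = 0"
  proof -
    have R0: "eps_delta_bisim P E L \<epsilon> 0 R" using R d by simp
    have "reach_prob P E g s t - reach_prob P E g s' t \<le> 1 - exp (- (q * \<epsilon>) * t)"
      by (rule reach_bound[where E=E, OF E main1[where E=E, OF E assms(2) R0 assms(3) q ss assms(6)]])
    moreover have "reach_prob P E g s' t - reach_prob P E g s t \<le> 1 - exp (- (q * \<epsilon>) * t)"
      by (rule reach_bound[where E=E, OF E main1[where E=E, OF E assms(2) R0 assms(3) q s's assms(6)]])
    moreover have "1 - exp (- (q * \<epsilon>) * t) = 1 - exp (- q * t * \<epsilon>)" by (simp add: algebra_simps)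
    ultimately show ?thesis by (intro abs_leI) linarith+
  qed
  have P2: "\<bar>reach_prob P E g s t - reach_prob P E g s' t\<bar> \<le> 1 - exp (- q * t * (exp \<delta> - 1))" if e: "\<epsilon> = 0"
  proof -
    have R0: "eps_delta_bisim P E L 0 \<delta> R" using R e by simp
    have "reach_prob P E g s t - reach_prob P E g s' t \<le> 1 - exp (- (q * (exp \<delta> - 1)) * t)"
      by (rule reach_bound[where E=E, OF E main2[where E=E, OF E assms(2) R0 assms(4) q ss assms(6)]])
    moreover have "reach_prob P E g s' t - reach_prob P E g s t \<le> 1 - exp (- (q * (exp \<delta> - 1)) * t)"
      by (rule reach_bound[where E=E, OF E main2[where E=E, OF E assms(2) R0 assms(4) q s's assms(6)]])
    moreover have "1 - exp (- (q * (exp \<delta> - 1)) * t) = 1 - exp (- q * t * (exp \<delta> - 1))" by (simp add: algebra_simps)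
    ultimately show ?thesis by (intro abs_leI) linarith+
  qed
  have P3: "reach_prob P E g s t = reach_prob P E g s' t" if "\<epsilon> = 0" "\<delta> = 0"
    using P1[OF that(2)] that(1) by simp
  show ?thesis using P1 P2 P3 by blast
qed

end
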